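(* Every (fork, co-cricket)-free graph $G$ satisfies $\chi(G)\le\omega(G)^2$.
   Context: All graphs are finite and simple; $\chi$ is chromatic number, $\omega$ clique number. The fork is obtained from $K_{1,3}$ by subdividing one edge once. The co-cricket is the disjoint union of a diamond ($K_4$ minus an edge) and an isolated vertex. $G$ is $(H_1,H_2)$-free if it has no induced subgraph isomorphic to $H_1$ or $H_2$. *)

theory Defs
  imports Main
begin

definition graph :: "'a set \<Rightarrow> ('a \<Rightarrow> 'a \<Rightarrow> bool) \<Rightarrow> bool" where
  "graph V E \<longleftrightarrow> finite V \<and> (\<forall>x y. E x y \<longrightarrow> x \<in> V \<and> y \<in> V)
     \<and> (\<forall>x y. E x y \<longrightarrow> E y x) \<and> (\<forall>x. \<not> E x x)"

definition has_induced :: "'a set \<Rightarrow> ('a \<Rightarrow> 'a \<Rightarrow> bool) \<Rightarrow> nat \<Rightarrow> (nat \<Rightarrow> nat \<Rightarrow> bool) \<Rightarrow> bool" where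
  "has_induced V E n F \<longleftrightarrow> (\<exists>f. inj_on f {0..<n} \<and> f ` {0..<n} \<subseteq> V
     \<and> (\<forall>i<n. \<forall>j<n. F i j \<longleftrightarrow> E (f i) (f j)))"

text \<open>Fork: K_{1,3} with centre 0 and leaves 1,2,3, edge 0-3 subdivided by vertex 4.\<close>
definition fork_edge :: "nat \<Rightarrow> nat \<Rightarrow> bool" where
  "fork_edge i j \<longleftrightarrow> {i, j} \<in> {{0,1}, {0,2}, {0,4}, {4,3}}"

text \<open>Co-cricket: diamond (K4 on 0..3 minus the edge 2-3) plus isolated vertex 4.\<close>
definition cocricket_edge :: "nat \<Rightarrow> nat \<Rightarrow> bool" where
  "cocricket_edge i j \<longleftrightarrow> {i, j} \<in> {{0,1}, {0,2}, {0,3}, {1,2}, {1,3}}"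

definition clique :: "('a \<Rightarrow> 'a \<Rightarrow> bool) \<Rightarrow> 'a set \<Rightarrow> bool" where
  "clique E K \<longleftrightarrow> (\<forall>x\<in>K. \<forall>y\<in>K. x \<noteq> y \<longrightarrow> E x y)"

definition clique_number :: "'a set \<Rightarrow> ('a \<Rightarrow> 'a \<Rightarrow> bool) \<Rightarrow> nat" where
  "clique_number V E = Max {card K | K. K \<subseteq> V \<and> clique E K}"

definition proper_colouring :: "'a set \<Rightarrow> ('a \<Rightarrow> 'a \<Rightarrow> bool) \<Rightarrow> nat \<Rightarrow> ('a \<Rightarrow> nat) \<Rightarrow> bool" where
  "proper_colouring V E k c \<longleftrightarrow> c ` V \<subseteq> {0..<k} \<and> (\<forall>x\<in>V. \<forall>y\<in>V. E x y \<longrightarrow> c x \<noteq> c y)"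

definition chromatic_number :: "'a set \<Rightarrow> ('a \<Rightarrow> 'a \<Rightarrow> bool) \<Rightarrow> nat" where
  "chromatic_number V E = (LEAST k. \<exists>c. proper_colouring V E k c)"

end

theory Submission
  imports Defs
begin

lemma fork_edge_iff: "fork_edge i j \<longleftrightarrow> (i=0\<and>j=1 \<or> i=1\<and>j=0 \<or> i=0\<and>j=2 \<or> i=2\<and>j=0 \<or> i=0\<and>j=4 \<or> i=4\<and>j=0 \<or> i=4\<and>j=3 \<or> i=3\<and>j=4)"
  unfolding fork_edge_def by (auto simp: doubleton_eq_iff)

lemma coc_edge_iff: "cocricket_edge i j \<longleftrightarrow> (i=0\<and>j=1 \<or> i=1\<and>j=0 \<or> i=0\<and>j=2 \<or> i=2\<and>j=0 \<or> i=0\<and>j=3 \<or> i=3\<and>j=0 \<or> i=1\<and>j=2 \<or> i=2\<and>j=1 \<or> i=1\<and>j=3 \<or> i=3\<and>j=1)"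
  unfolding cocricket_edge_def by (auto simp: doubleton_eq_iff)

lemma less5: "(i::nat) < 5 \<Longrightarrow> i = 0 \<or> i = 1 \<or> i = 2 \<or> i = 3 \<or> i = 4" by auto

lemma has_induced_mono: "has_induced A E n F \<Longrightarrow> A \<subseteq> B \<Longrightarrow> has_induced B E n F"
  unfolding has_induced_def by (meson subset_trans)

locale sg =
  fixes E :: "'a \<Rightarrow> 'a \<Rightarrow> bool"
  assumes sym: "E x y \<Longrightarrow> E y x"
  and irr: "\<not> E x x"
begin

lemma fork_found:
  assumes "c \<in> S" "p \<in> S" "q \<in> S" "r \<in> S" "w \<in> S"
   "E c p" "E c q" "E c r" "E r w" "\<not>E p q" "\<not>E p r" "\<not>E q r" "\<not>E c w" "\<not>E p w" "\<not>E q w" "p \<noteq> q"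
  shows "has_induced S E 5 fork_edge"
proof -
  define f where "f = (\<lambda>i::nat. if i=0 then c else if i=1 then p else if i=2 then q else if i=3 then w else r)"
  have d: "c\<noteq>p" "c\<noteq>q" "c\<noteq>r" "c\<noteq>w" "p\<noteq>r" "q\<noteq>r" "p\<noteq>w" "q\<noteq>w" "r\<noteq>w"
    using assms(6) irr apply metis using assms(7) irr apply metis using assms(8) irr apply metis
    using assms(6,14) sym apply metis using assms(9,14) apply metis using assms(9,15) apply metis
    using assms(6,13) apply metis using assms(7,13) apply metis using assms(9) irr by metis
  have e: "E p c" "E q c" "E r c" "E w r" "\<not>E q p" "\<not>E r p" "\<not>E r q" "\<not>E w c" "\<not>E w p" "\<not>E w q"
    using assms(6-15) sym by blast+
  have "inj_on f {0..<5}"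
  proof (rule inj_onI)
    fix i j assume "i \<in> {0..<(5::nat)}" "j \<in> {0..<(5::nat)}" "f i = f j"
    then have "i < 5" "j < 5" "f i = f j" by auto
    then show "i = j" using less5[OF \<open>i<5\<close>] less5[OF \<open>j<5\<close>] apply (elim disjE) using d assms(16) by (simp_all add: f_def)
  qed
  moreover have "f ` {0..<5} \<subseteq> S" using assms(1-5) by (auto simp: f_def)
  moreover have "\<forall>i<5. \<forall>j<5. fork_edge i j \<longleftrightarrow> E (f i) (f j)"
  proof (intro allI impI)
    fix i j :: nat assume "i < 5" "j < 5"
    then show "fork_edge i j \<longleftrightarrow> E (f i) (f j)"
      using less5[OF \<open>i<5\<close>] less5[OF \<open>j<5\<close>] apply (elim disjE) using e assms(6-15) irr by (simp_all add: f_def fork_edge_iff)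
  qed
  ultimately show ?thesis unfolding has_induced_def by blast
qed

lemma coc_found:
  assumes "a\<in>S" "b\<in>S" "c\<in>S" "d\<in>S" "v\<in>S" "E a b" "E a c" "E a d" "E b c" "E b d" "\<not>E c d" "c\<noteq>d"
    "\<not>E v a" "\<not>E v b" "\<not>E v c" "\<not>E v d"
  shows "has_induced S E 5 cocricket_edge"
proof -
  define f where "f = (\<lambda>i::nat. if i=0 then a else if i=1 then b else if i=2 then c else if i=3 then d else v)"
  have d: "a\<noteq>b" "a\<noteq>c" "a\<noteq>d" "b\<noteq>c" "b\<noteq>d" "v\<noteq>a" "v\<noteq>b" "v\<noteq>c" "v\<noteq>d"
    using assms(6) irr apply metis using assms(7) irr apply metis using assms(8) irr apply metis
    using assms(9) irr apply metis using assms(10) irr apply metis using assms(6,14) apply metis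
    using assms(6,13) sym apply metis using assms(7,13) sym apply metis using assms(8,13) sym by metis
  have e: "E b a" "E c a" "E d a" "E c b" "E d b" "\<not>E d c" "\<not>E a v" "\<not>E b v" "\<not>E c v" "\<not>E d v"
    using assms(6-16) sym by blast+
  have "inj_on f {0..<5}"
  proof (rule inj_onI)
    fix i j assume "i \<in> {0..<(5::nat)}" "j \<in> {0..<(5::nat)}" "f i = f j"
    then have "i < 5" "j < 5" "f i = f j" by auto
    then show "i = j" using less5[OF \<open>i<5\<close>] less5[OF \<open>j<5\<close>] apply (elim disjE) using d assms(12) by (simp_all add: f_def)
  qed
  moreover have "f ` {0..<5} \<subseteq> S" using assms(1-5) by (auto simp: f_def)
  moreover have "\<forall>i<5. \<forall>j<5. cocricket_edge i j \<longleftrightarrow> E (f i) (f j)"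
  proof (intro allI impI)
    fix i j :: nat assume "i < 5" "j < 5"
    then show "cocricket_edge i j \<longleftrightarrow> E (f i) (f j)"
      using less5[OF \<open>i<5\<close>] less5[OF \<open>j<5\<close>] apply (elim disjE) using e assms(6-16) irr by (simp_all add: f_def coc_edge_iff)
  qed
  ultimately show ?thesis unfolding has_induced_def by blast
qed


definition nbrs :: "'a set \<Rightarrow> 'a \<Rightarrow> 'a set" where "nbrs S x = {y\<in>S. E x y}"
definition cliqb :: "'a set \<Rightarrow> nat \<Rightarrow> bool" where
  "cliqb S k \<longleftrightarrow> (\<forall>K. K \<subseteq> S \<longrightarrow> clique E K \<longrightarrow> card K \<le> k)"
definition nodiam :: "'a set \<Rightarrow> bool" where
  "nodiam S \<longleftrightarrow> (\<forall>a\<in>S. \<forall>b\<in>S. \<forall>c\<in>S. \<forall>d\<in>S. E a b \<longrightarrow> E a c \<longrightarrow> E a d \<longrightarrow> E b c \<longrightarrow> E b d \<longrightarrow> c \<noteq> d \<longrightarrow> E c d)"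

lemma card_split: "finite X \<Longrightarrow> finite Z \<Longrightarrow> card X \<le> card (X - Z) + card Z"
proof -
  assume "finite X" "finite Z"
  have "card X \<le> card ((X - Z) \<union> Z)" by (rule card_mono) (use \<open>finite X\<close> \<open>finite Z\<close> in auto)
  also have "\<dots> \<le> card (X - Z) + card Z" by (rule card_Un_le)
  finally show ?thesis .
qed

lemma tri_free:
  assumes fin: "finite S" and nf: "\<not> has_induced S E 5 fork_edge" and nd: "nodiam S" and cb: "cliqb S k"
    and deg: "\<forall>v\<in>S. 2*k-1 \<le> card (nbrs S v)"
    and xS: "x\<in>S" and bS: "b\<in>S" and b'S: "b'\<in>S" and xb: "E x b" and xb': "E x b'" and bb': "E b b'"
  shows False
proof -
  have ndf: "\<And>a b c d. a\<in>S \<Longrightarrow> b\<in>S \<Longrightarrow> c\<in>S \<Longrightarrow> d\<in>S \<Longrightarrow> E a b \<Longrightarrow> E a c \<Longrightarrow> E a d \<Longrightarrow> E b c \<Longrightarrow> E b d \<Longrightarrow> c \<noteq> d \<Longrightarrow> E c d"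
    using nd unfolding nodiam_def by blast
  have cbf: "\<And>K. K \<subseteq> S \<Longrightarrow> clique E K \<Longrightarrow> card K \<le> k" using cb unfolding cliqb_def by blast
  have dxb: "x\<noteq>b" "x\<noteq>b'" "b\<noteq>b'" using irr xb xb' bb' by metis+
  have k3: "3 \<le> k"
  proof -
    have "clique E {x,b,b'}" using xb xb' bb' sym unfolding clique_def by auto
    moreover have "card {x,b,b'} = 3" using dxb by simp
    ultimately show ?thesis using cbf[of "{x,b,b'}"] xS bS b'S by auto
  qed
  define T where "T = {y\<in>S. E x y \<and> E b y}"
  have b'T: "b' \<in> T" using b'S xb' bb' T_def by auto
  have finT: "finite T" using fin T_def by auto
  have cT: "clique E (insert x (insert b T))"
    unfolding clique_def T_def using xb sym ndf[OF xS bS _ _ xb] by auto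
  have "x \<notin> T" "b \<notin> T" using irr T_def by auto
  hence "card (insert x (insert b T)) = card T + 2" using finT dxb by simp
  moreover have "insert x (insert b T) \<subseteq> S" using xS bS T_def by auto
  ultimately have hT: "card T + 2 \<le> k" using cbf cT by metis
  define U where "U = nbrs S b - insert x T"
  have "card (nbrs S b) \<le> card U + card (insert x T)"
    unfolding U_def by (rule card_split) (use fin finT in \<open>auto simp: nbrs_def\<close>)
  moreover have "card (insert x T) \<le> card T + 1" using finT by (simp add: card_insert_if)
  moreover have "2*k-1 \<le> card (nbrs S b)" using deg bS by auto
  ultimately have "card U > 0" using hT k3 by linarith
  then obtain u where "u \<in> U" by (metis card.empty all_not_in_conv less_irrefl)
  hence uS: "u\<in>S" and bu: "E b u" and ux: "u \<noteq> x" and xu: "\<not> E x u"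
    unfolding U_def nbrs_def T_def by auto
  have ub': "\<not> E u b'"
  proof
    assume "E u b'"
    hence "E x u" using ndf[OF bS b'S xS uS bb' sym[OF xb] bu sym[OF xb'] sym[OF \<open>E u b'\<close>]] ux by metis
    thus False using xu by simp
  qed
  define R where "R = nbrs S x - insert b T"
  have finR: "finite R" using fin R_def nbrs_def by auto
  have "card (nbrs S x) \<le> card R + card (insert b T)"
    unfolding R_def by (rule card_split) (use fin finT in \<open>auto simp: nbrs_def\<close>)
  moreover have "card (insert b T) \<le> card T + 1" using finT by (simp add: card_insert_if)
  moreover have "2*k-1 \<le> card (nbrs S x)" using deg xS by auto
  ultimately have cR: "k \<le> card R" using hT k3 by linarith
  have Rf: "s\<in>S" "E x s" "s \<noteq> b" "\<not> E b s" if "s\<in>R" for s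
    using that unfolding R_def nbrs_def T_def by auto
  have Rb': "\<not> E b' s" if "s\<in>R" for s
  proof
    assume "E b' s"
    hence "E b s" using ndf[OF xS b'S bS Rf(1)[OF that] xb' xb Rf(2)[OF that] sym[OF bb'] \<open>E b' s\<close>] Rf(3)[OF that] by metis
    thus False using Rf(4)[OF that] by simp
  qed
  have xR: "x \<notin> R" using irr R_def nbrs_def by auto
  have b'R: "b' \<notin> R" using b'T R_def by auto
  show False
  proof (cases "\<exists>c\<in>R. E u c")
    case False
    have "\<exists>s1\<in>R. \<exists>s2\<in>R. s1 \<noteq> s2 \<and> \<not> E s1 s2"
    proof (rule ccontr)
      assume "\<not> ?thesis"
      hence "clique E (insert x R)" unfolding clique_def using Rf(2) sym by auto
      moreover have "insert x R \<subseteq> S" using xS Rf(1) by auto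
      ultimately have "card (insert x R) \<le> k" using cbf by blast
      moreover have "card (insert x R) = card R + 1" using finR xR by simp
      ultimately show False using cR by linarith
    qed
    then obtain s1 s2 where s: "s1\<in>R" "s2\<in>R" "s1\<noteq>s2" "\<not> E s1 s2" by blast
    have "has_induced S E 5 fork_edge"
      apply (rule fork_found[of x S s1 s2 b u])
      using xS Rf[OF s(1)] Rf[OF s(2)] bS uS xb bu s(3,4) xu False s(1,2) sym by auto
    thus False using nf by simp
  next
    case True
    then obtain c where cR': "c\<in>R" and uc: "E u c" by blast
    define P where "P = {y\<in>R. E c y}"
    have finP: "finite P" using finR P_def by auto
    have cP: "clique E (insert x (insert c P))"
      unfolding clique_def P_def using Rf(2)[OF cR'] Rf(2) Rf(1) sym ndf[OF xS Rf(1)[OF cR'] _ _ Rf(2)[OF cR']] by auto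
    have "x \<notin> P" "c \<notin> P" using irr xR P_def by auto
    moreover have "x \<noteq> c" using cR' xR by auto
    ultimately have "card (insert x (insert c P)) = card P + 2" using finP by simp
    moreover have "insert x (insert c P) \<subseteq> S" using xS Rf(1) cR' P_def by auto
    ultimately have hP: "card P + 2 \<le> k" using cbf cP by metis
    have "card R \<le> card (R - insert c P) + card (insert c P)"
      by (rule card_split) (use finR finP in auto)
    moreover have "card (insert c P) \<le> card P + 1" using finP by (simp add: card_insert_if)
    ultimately have "card (R - insert c P) > 0" using hP cR by linarith
    then obtain q where "q \<in> R - insert c P" by (metis card.empty all_not_in_conv less_irrefl)
    hence qR: "q\<in>R" and qc: "q \<noteq> c" and cq: "\<not> E c q" unfolding P_def by auto
    show False
    proof (cases "E u q")
      case True
      have "has_induced S E 5 fork_edge"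
        apply (rule fork_found[of u S c q b b'])
        using uS Rf[OF cR'] Rf[OF qR] bS b'S uc True bu bb' cq ub' Rb'[OF cR'] Rb'[OF qR] qc sym by auto
      thus False using nf by simp
    next
      case False
      have "has_induced S E 5 fork_edge"
        apply (rule fork_found[of x S b' q c u])
        using xS b'S Rf[OF qR] Rf[OF cR'] uS xb' uc cq xu ub' False Rb'[OF cR'] Rb'[OF qR] b'R qR sym by auto
      thus False using nf by simp
    qed
  qed
qed


lemma three_elems:
  assumes "finite A" "3 \<le> card A"
  shows "\<exists>a1 a2 a3. a1\<in>A \<and> a2\<in>A \<and> a3\<in>A \<and> a1\<noteq>a2 \<and> a1\<noteq>a3 \<and> a2\<noteq>a3"
proof -
  obtain a1 where a1: "a1 \<in> A" using assms by fastforce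
  have "2 \<le> card (A - {a1})" using assms a1 by (simp add: card_Diff_singleton)
  then have "A - {a1} \<noteq> {}" by (metis card.empty not_numeral_le_zero)
  then obtain a2 where a2: "a2 \<in> A - {a1}" by blast
  have "1 \<le> card (A - {a1} - {a2})" using assms a2 \<open>2 \<le> card (A - {a1})\<close> by (simp add: card_Diff_singleton)
  then have "A - {a1} - {a2} \<noteq> {}" by (metis card.empty not_one_le_zero)
  then obtain a3 where a3: "a3 \<in> A - {a1} - {a2}" by blast
  show ?thesis using a1 a2 a3 by blast
qed

lemma bip_piece:
  assumes fin: "finite S" and nf: "\<not> has_induced S E 5 fork_edge"
    and tri: "\<And>x y z. x\<in>S \<Longrightarrow> y\<in>S \<Longrightarrow> z\<in>S \<Longrightarrow> E x y \<Longrightarrow> E y z \<Longrightarrow> \<not> E x z"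
    and deg: "\<forall>v\<in>S. 3 \<le> card (nbrs S v)" and vS: "v \<in> S"
  shows "\<exists>C c. v \<in> C \<and> C \<subseteq> S \<and> (\<forall>x\<in>C. \<forall>y\<in>S-C. \<not>E x y) \<and> proper_colouring C E 2 c"
proof -
  define A where "A = nbrs S v"
  define B where "B = {u\<in>S. u \<noteq> v \<and> \<not>E v u \<and> (\<exists>a\<in>A. E a u)}"
  define D where "D = {w\<in>S. w \<noteq> v \<and> w \<notin> A \<and> w \<notin> B \<and> (\<exists>u\<in>B. E u w)}"
  define C where "C = insert v (A \<union> B \<union> D)"
  have A_iff: "\<And>a. a \<in> A \<longleftrightarrow> a\<in>S \<and> E v a" by (simp add: A_def nbrs_def)
  have B_iff: "\<And>u. u \<in> B \<longleftrightarrow> u\<in>S \<and> u \<noteq> v \<and> \<not>E v u \<and> (\<exists>a\<in>A. E a u)" by (simp add: B_def)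
  have D_iff: "\<And>w. w \<in> D \<longleftrightarrow> w\<in>S \<and> w \<noteq> v \<and> w \<notin> A \<and> w \<notin> B \<and> (\<exists>u\<in>B. E u w)" by (simp add: D_def)
  have finA: "finite A" using fin A_def nbrs_def by auto
  obtain a1 a2 a3 where a: "a1\<in>A" "a2\<in>A" "a3\<in>A" "a1\<noteq>a2" "a1\<noteq>a3" "a2\<noteq>a3"
    using three_elems[OF finA] deg vS A_def by metis
  have Aind: "\<not>E a a'" if "a\<in>A" "a'\<in>A" for a a'
    using tri[of a v a'] vS that A_iff[of a] A_iff[of a'] sym[of v a] by blast
  have F1: "E u b \<or> E u c" if u: "u\<in>B" and b: "b\<in>A" and c: "c\<in>A" and bc: "b\<noteq>c" for u b c
  proof (rule ccontr)
    assume "\<not> (E u b \<or> E u c)"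
    hence nb: "\<not>E b u" "\<not>E c u" using sym by blast+
    obtain a where aA: "a\<in>A" and au: "E a u" using u B_iff by auto
    have uS: "u\<in>S" and vu: "\<not>E v u" using u B_iff by auto
    have "\<not>E b c" "\<not>E b a" "\<not>E c a" using Aind b c aA by auto
    have "has_induced S E 5 fork_edge"
      apply (rule fork_found[of v S b c a u])
      using vS A_iff[of b] A_iff[of c] A_iff[of a] b c aA uS au \<open>\<not>E b c\<close> \<open>\<not>E b a\<close> \<open>\<not>E c a\<close> vu nb bc by auto
    thus False using nf by simp
  qed
  have common: "\<exists>a\<in>A. E u a \<and> E u' a" if "u\<in>B" "u'\<in>B" for u u'
    using F1[OF that(1) a(1) a(2) a(4)] F1[OF that(1) a(1) a(3) a(5)] F1[OF that(1) a(2) a(3) a(6)]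
      F1[OF that(2) a(1) a(2) a(4)] F1[OF that(2) a(1) a(3) a(5)] F1[OF that(2) a(2) a(3) a(6)] a(1-3) by blast
  have two: "\<exists>p\<in>A. \<exists>q\<in>A. p \<noteq> q \<and> E u p \<and> E u q" if "u\<in>B" for u
    using F1[OF that a(1) a(2) a(4)] F1[OF that a(1) a(3) a(5)] F1[OF that a(2) a(3) a(6)] a by blast
  have Bind: "\<not>E u u'" if uu: "u\<in>B" "u'\<in>B" for u u'
  proof -
    obtain a where "a\<in>A" "E u a" "E u' a" using common[OF uu] by blast
    thus ?thesis using tri[of u a u'] uu B_iff[of u] B_iff[of u'] A_iff[of a] sym[of u' a] by blast
  qed
  have F3: "E w u" if w: "w\<in>D" and u: "u\<in>B" for w u
  proof -
    obtain u0 where u0: "u0\<in>B" "E u0 w" using w D_iff by auto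
    have wS: "w\<in>S" and wv: "w\<noteq>v" and wA: "w\<notin>A" and wB: "w\<notin>B" using w D_iff by auto
    have vw: "\<not>E v w" using wA wS A_iff by auto
    show ?thesis
    proof (cases "u = u0")
      case True thus ?thesis using u0 sym by auto
    next
      case False
      show ?thesis
      proof (rule ccontr)
        assume nwu: "\<not> E w u"
        obtain a where aA: "a\<in>A" and "E u0 a" "E u a" using common[OF u0(1) u] by blast
        have aw: "\<not>E a w" using wS wv vw wB aA B_iff[of w] by blast
        have "has_induced S E 5 fork_edge"
          apply (rule fork_found[of a S v u u0 w])
          using aA A_iff[of a] vS u u0 B_iff[of u] B_iff[of u0] wS \<open>E u0 a\<close> \<open>E u a\<close> sym Bind[OF u u0(1)] aw vw nwu
          by auto
        thus False using nf by simp
      qed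
    qed
  qed
  have Dind: "\<not>E w w'" if ww: "w\<in>D" "w'\<in>D" for w w'
  proof -
    obtain u0 where u0: "u0\<in>B" "E u0 w" using ww(1) D_iff by auto
    have "E w' u0" using F3[OF ww(2) u0(1)] .
    thus ?thesis using tri[of w u0 w'] ww D_iff[of w] D_iff[of w'] u0 B_iff[of u0] sym[of u0 w] sym[of w' u0] by blast
  qed
  have F5: "\<not>E x z" if x: "x\<in>C" and z: "z\<in>S" "z\<notin>C" for x z
  proof -
    have zv: "z\<noteq>v" "z\<notin>A" "z\<notin>B" "z\<notin>D" using z C_def by auto
    have vz: "\<not>E v z" using zv z A_iff by auto
    have az: "\<not>E a z" if "a\<in>A" for a using that zv z vz B_iff[of z] by blast
    have uz: "\<not>E u z" if "u\<in>B" for u using that zv z vz D_iff[of z] by blast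
    show ?thesis
    proof (cases "x \<in> D")
      case False
      thus ?thesis using x C_def vz az uz by auto
    next
      case True
      show ?thesis
      proof
        assume xz: "E x z"
        obtain u where u: "u\<in>B" "E u x" using True D_iff by auto
        obtain p q where pq: "p\<in>A" "q\<in>A" "p\<noteq>q" "E u p" "E u q" using two[OF u(1)] by blast
        have xS: "x\<in>S" and xv: "x\<noteq>v" and xA: "x\<notin>A" and xB: "x\<notin>B" using True D_iff by auto
        have vx: "\<not>E v x" using xA xS A_iff by auto
        have px: "\<not>E p x" "\<not>E q x" using pq xS xv vx xB B_iff[of x] by blast+
        have "has_induced S E 5 fork_edge"
          apply (rule fork_found[of u S p q x z])
          using u B_iff[of u] pq A_iff[of p] A_iff[of q] xS z Aind[OF pq(1,2)] px xz uz[OF u(1)] az[OF pq(1)] az[OF pq(2)]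
          by auto
        thus False using nf by simp
      qed
    qed
  qed
  define col where "col = (\<lambda>y. if y \<in> A \<union> D then 1 else (0::nat))"
  have "proper_colouring C E 2 col"
    unfolding proper_colouring_def
  proof (intro conjI ballI impI)
    show "col ` C \<subseteq> {0..<2}" unfolding col_def by auto
  next
    fix x y assume xC: "x\<in>C" and yC: "y\<in>C" and xy: "E x y"
    show "col x \<noteq> col y"
    proof (cases "x \<in> A \<union> D")
      case True
      show ?thesis
      proof (cases "y \<in> A \<union> D")
        case True
        have False using \<open>x \<in> A \<union> D\<close> True
        proof (elim UnE)
          assume "x\<in>A" "y\<in>A" thus False using Aind xy by blast
        next
          assume "x\<in>A" "y\<in>D" thus False using xy D_iff[of y] B_iff[of y] A_iff[of y] by blast
        next
          assume "x\<in>D" "y\<in>A" thus False using sym[OF xy] D_iff[of x] B_iff[of x] A_iff[of x] by blast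
        next
          assume "x\<in>D" "y\<in>D" thus False using Dind xy by blast
        qed
        thus ?thesis ..
      next
        case False thus ?thesis using \<open>x \<in> A \<union> D\<close> col_def by auto
      qed
    next
      case False
      hence xvB: "x = v \<or> x \<in> B" using xC C_def by auto
      show ?thesis
      proof (cases "y \<in> A \<union> D")
        case True thus ?thesis using False col_def by auto
      next
        case False
        hence "y = v \<or> y \<in> B" using yC C_def by auto
        hence False using xvB xy irr[of v] B_iff[of x] B_iff[of y] Bind[of x y] sym[OF xy] by blast
        thus ?thesis ..
      qed
    qed
  qed
  moreover have "v \<in> C" "C \<subseteq> S" using C_def vS A_def nbrs_def B_def D_def by auto
  ultimately show ?thesis using F5 by blast
qed


lemma free_colour:
  assumes "finite X" "card X < (n::nat)"
  shows "\<exists>x<n. x \<notin> X"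
proof (rule ccontr)
  assume "\<not> (\<exists>x<n. x \<notin> X)"
  hence "{0..<n} \<subseteq> X" by auto
  hence "card {0..<n} \<le> card X" by (rule card_mono[OF assms(1)])
  thus False using assms(2) by simp
qed

lemma nodiam_sub: "nodiam S \<Longrightarrow> A \<subseteq> S \<Longrightarrow> nodiam A" unfolding nodiam_def by blast
lemma cliqb_sub: "cliqb S k \<Longrightarrow> A \<subseteq> S \<Longrightarrow> cliqb A k" unfolding cliqb_def by blast
lemma nofork_sub: "\<not> has_induced S E n F \<Longrightarrow> A \<subseteq> S \<Longrightarrow> \<not> has_induced A E n F"
  using has_induced_mono by blast

lemma diam_col:
  assumes "finite S" "\<not> has_induced S E 5 fork_edge" "nodiam S" "cliqb S k" "1 \<le> k"
  shows "\<exists>c. proper_colouring S E (2*k-1) c"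
  using assms
proof (induction S rule: finite_psubset_induct)
  case (psubset S)
  note IH = psubset.IH
  have finS: "finite S" and nf: "\<not> has_induced S E 5 fork_edge" and nd: "nodiam S" and cb: "cliqb S k"
    and k1: "1 \<le> k" using psubset.prems psubset.hyps by auto
  show ?case
  proof (cases "\<exists>v\<in>S. card (nbrs S v) \<le> 2*k-2")
    case True
    then obtain v where vS: "v\<in>S" and dv: "card (nbrs S v) \<le> 2*k-2" by blast
    have sub: "S - {v} \<subset> S" using vS by blast
    have sS: "S - {v} \<subseteq> S" by blast
    have finS': "finite (S - {v})" using finS by blast
    obtain c where c: "proper_colouring (S - {v}) E (2*k-1) c"
      using IH[OF sub nofork_sub[OF nf sS] nodiam_sub[OF nd sS] cliqb_sub[OF cb sS] k1] by blast
    have finN: "finite (nbrs S v)" using finS nbrs_def by auto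
    have "card (c ` nbrs S v) \<le> card (nbrs S v)" using finN by (rule card_image_le)
    hence "card (c ` nbrs S v) < 2*k-1" using dv k1 by linarith
    then obtain col where col: "col < 2*k-1" "col \<notin> c ` nbrs S v"
      using free_colour finN by blast
    define c' where "c' = c(v := col)"
    have cr: "c x < 2*k-1" if "x \<in> S - {v}" for x using c that unfolding proper_colouring_def by auto
    have cp: "c x \<noteq> c y" if "x \<in> S - {v}" "y \<in> S - {v}" "E x y" for x y
      using c that unfolding proper_colouring_def by auto
    have "proper_colouring S E (2*k-1) c'"
      unfolding proper_colouring_def
    proof (intro conjI ballI impI)
      show "c' ` S \<subseteq> {0..<2*k-1}" using cr col unfolding c'_def by auto
    next
      fix x y assume xS: "x\<in>S" and yS: "y\<in>S" and xy: "E x y"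
      show "c' x \<noteq> c' y"
      proof (cases "x = v")
        case True
        hence "y \<noteq> v" using xy irr by auto
        hence "c' y = c y" "y \<in> nbrs S v" using True xy yS unfolding c'_def nbrs_def by auto
        thus ?thesis using col True unfolding c'_def by auto
      next
        case False
        show ?thesis
        proof (cases "y = v")
          case True
          hence "c' x = c x" "x \<in> nbrs S v" using False sym[OF xy] xS unfolding c'_def nbrs_def by auto
          thus ?thesis using col True unfolding c'_def by auto
        next
          case False
          thus ?thesis using \<open>x \<noteq> v\<close> cp[of x y] xS yS xy unfolding c'_def by auto
        qed
      qed
    qed
    thus ?thesis by blast
  next
    case False
    have deg: "\<forall>v\<in>S. 2*k-1 \<le> card (nbrs S v)"
    proof
      fix v assume "v \<in> S"
      hence "\<not> card (nbrs S v) \<le> 2*k-2" using False by blast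
      thus "2*k-1 \<le> card (nbrs S v)" by arith
    qed
    show ?thesis
    proof (cases "S = {}")
      case True
      thus ?thesis by (auto simp: proper_colouring_def)
    next
      case False
      then obtain v where vS: "v \<in> S" by blast
      have "2*k-1 \<le> card (nbrs S v)" using deg vS by blast
      hence "1 \<le> card (nbrs S v)" using k1 by arith
      hence "nbrs S v \<noteq> {}" by (metis card.empty not_one_le_zero)
      then obtain y where "y \<in> nbrs S v" by blast
      hence yS: "y\<in>S" and vy: "E v y" unfolding nbrs_def by auto
      have "clique E {v,y}" using vy sym unfolding clique_def by auto
      moreover have "card {v,y} = 2" using vy irr by (cases "v = y") auto
      ultimately have k2: "2 \<le> k" using cb vS yS unfolding cliqb_def by (metis empty_subsetI insert_subset)
      have tri: "\<not> E x z" if "x\<in>S" "y\<in>S" "z\<in>S" "E x y" "E y z" for x y z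
      proof
        assume "E x z"
        show False using tri_free[OF finS nf nd cb deg that(1,2,3) that(4) \<open>E x z\<close> that(5)] .
      qed
      have deg3: "\<forall>v\<in>S. 3 \<le> card (nbrs S v)"
      proof
        fix u assume "u \<in> S"
        hence "2*k-1 \<le> card (nbrs S u)" using deg by blast
        thus "3 \<le> card (nbrs S u)" using k2 by arith
      qed
      have "\<exists>C c. v \<in> C \<and> C \<subseteq> S \<and> (\<forall>x\<in>C. \<forall>y\<in>S-C. \<not>E x y) \<and> proper_colouring C E 2 c"
        by (rule bip_piece[OF finS nf tri deg3 vS])
      then obtain C c where C: "v \<in> C" "C \<subseteq> S" "\<forall>x\<in>C. \<forall>y\<in>S-C. \<not>E x y" and c: "proper_colouring C E 2 c"
        by auto
      have sub: "S - C \<subset> S" using C(1) vS by blast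
      have sS: "S - C \<subseteq> S" by blast
      have finS': "finite (S - C)" using finS by blast
      obtain c' where c': "proper_colouring (S - C) E (2*k-1) c'"
        using IH[OF sub nofork_sub[OF nf sS] nodiam_sub[OF nd sS] cliqb_sub[OF cb sS] k1] by blast
      define col where "col = (\<lambda>x. if x \<in> C then c x else c' x)"
      have "proper_colouring S E (2*k-1) col"
        unfolding proper_colouring_def
      proof (intro conjI ballI impI)
        show "col ` S \<subseteq> {0..<2*k-1}" using c c' k2 unfolding col_def proper_colouring_def by fastforce
      next
        fix x y assume xS: "x\<in>S" and yS: "y\<in>S" and xy: "E x y"
        show "col x \<noteq> col y"
        proof (cases "x \<in> C")
          case True
          hence "y \<in> C" using C(3) xy yS by blast
          thus ?thesis using True c xy unfolding col_def proper_colouring_def by auto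
        next
          case False
          hence "y \<notin> C" using C(3) sym[OF xy] xS by blast
          thus ?thesis using False c' xy xS yS unfolding col_def proper_colouring_def by auto
        qed
      qed
      thus ?thesis by blast
    qed
  qed
qed

lemma sq_id: "1 \<le> (w::nat) \<Longrightarrow> (w-1)^2 + (2*w-1) = w^2"
  by (cases w) (auto simp: power2_eq_square)

lemma main_col:
  assumes "finite S" "\<not> has_induced S E 5 fork_edge" "\<not> has_induced S E 5 cocricket_edge" "cliqb S w"
  shows "\<exists>c. proper_colouring S E (w^2) c"
  using assms
proof (induction S arbitrary: w rule: finite_psubset_induct)
  case (psubset S)
  note IH = psubset.IH
  have finS: "finite S" and nf: "\<not> has_induced S E 5 fork_edge" and nc: "\<not> has_induced S E 5 cocricket_edge"
    and cb: "cliqb S w" using psubset.prems psubset.hyps by auto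
  show ?case
  proof (cases "S = {}")
    case True
    thus ?thesis by (auto simp: proper_colouring_def)
  next
    case False
    then obtain v where vS: "v \<in> S" by blast
    have "clique E {v}" unfolding clique_def by auto
    hence "card {v} \<le> w" using cb vS unfolding cliqb_def by blast
    hence w1: "1 \<le> w" by simp
    define N where "N = nbrs S v"
    have vN: "v \<notin> N" using irr N_def nbrs_def by auto
    have NS: "N \<subseteq> S" using N_def nbrs_def by auto
    have sub: "N \<subset> S" using vN NS vS by blast
    have cbN: "cliqb N (w-1)"
      unfolding cliqb_def
    proof (intro allI impI)
      fix K assume KN: "K \<subseteq> N" and cK: "clique E K"
      have vK: "E v z" if "z \<in> K" for z using that KN unfolding N_def nbrs_def by auto
      have "clique E (insert v K)" unfolding clique_def
      proof (intro ballI impI)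
        fix x y assume x: "x \<in> insert v K" and y: "y \<in> insert v K" and xy: "x \<noteq> y"
        show "E x y"
        proof (cases "x = v")
          case True
          hence "y \<in> K" using y xy by auto
          thus ?thesis using vK True by simp
        next
          case False
          hence xK: "x \<in> K" using x by auto
          show ?thesis
          proof (cases "y = v")
            case True thus ?thesis using sym[OF vK[OF xK]] by simp
          next
            case False
            hence "y \<in> K" using y by auto
            thus ?thesis using xK xy cK unfolding clique_def by blast
          qed
        qed
      qed
      moreover have "insert v K \<subseteq> S" using KN NS vS by blast
      ultimately have "card (insert v K) \<le> w" using cb unfolding cliqb_def by blast
      moreover have "finite K" by (rule finite_subset[OF subset_trans[OF KN NS] finS])
      moreover have "v \<notin> K" using KN vN by blast
      ultimately show "card K \<le> w-1" by simp
    qed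
    have finN: "finite N" by (rule finite_subset[OF NS finS])
    obtain c1 where c1: "proper_colouring N E ((w-1)^2) c1"
      using IH[OF sub nofork_sub[OF nf NS] nofork_sub[OF nc NS] cbN] by blast
    define M where "M = S - N"
    have MS: "M \<subseteq> S" using M_def by auto
    have ndM: "nodiam M"
      unfolding nodiam_def
    proof (intro ballI impI)
      fix a b c d assume abcd: "a\<in>M" "b\<in>M" "c\<in>M" "d\<in>M" and e: "E a b" "E a c" "E a d" "E b c" "E b d" "c \<noteq> d"
      have nv: "\<not>E v a" "\<not>E v b" "\<not>E v c" "\<not>E v d" using abcd unfolding M_def N_def nbrs_def by auto
      show "E c d"
      proof (rule ccontr)
        assume "\<not> E c d"
        have inS: "a\<in>S" "b\<in>S" "c\<in>S" "d\<in>S" using abcd MS by auto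
        have "has_induced S E 5 cocricket_edge"
          by (rule coc_found[of a S b c d v]) (use inS vS e nv \<open>\<not> E c d\<close> in auto)
        thus False using nc by simp
      qed
    qed
    have finM: "finite M" by (rule finite_subset[OF MS finS])
    obtain c2 where c2: "proper_colouring M E (2*w-1) c2"
      using diam_col[OF finM nofork_sub[OF nf MS] ndM cliqb_sub[OF cb MS] w1] by blast
    define col where "col = (\<lambda>x. if x \<in> N then c1 x else (w-1)^2 + c2 x)"
    have "proper_colouring S E (w^2) col"
      unfolding proper_colouring_def
    proof (intro conjI ballI impI)
      have "col x < w^2" if "x \<in> S" for x
      proof (cases "x \<in> N")
        case True
        hence "c1 x < (w-1)^2" using c1 unfolding proper_colouring_def by auto
        moreover have "(w-1)^2 \<le> w^2" using sq_id[OF w1] by linarith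
        moreover have "col x = c1 x" using True col_def by simp
        ultimately show ?thesis by linarith
      next
        case False
        hence "x \<in> M" using that M_def by auto
        hence "c2 x < 2*w-1" using c2 unfolding proper_colouring_def by auto
        moreover have "col x = (w-1)^2 + c2 x" using False col_def by simp
        ultimately show ?thesis using sq_id[OF w1] by linarith
      qed
      thus "col ` S \<subseteq> {0..<w^2}" by auto
    next
      fix x y assume xS: "x\<in>S" and yS: "y\<in>S" and xy: "E x y"
      show "col x \<noteq> col y"
      proof (cases "x \<in> N")
        case True
        show ?thesis
        proof (cases "y \<in> N")
          case True
          thus ?thesis using \<open>x \<in> N\<close> c1 xy unfolding col_def proper_colouring_def by auto
        next
          case False
          have "c1 x < (w-1)^2" using c1 \<open>x \<in> N\<close> unfolding proper_colouring_def by auto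
          thus ?thesis using \<open>x \<in> N\<close> False unfolding col_def by auto
        qed
      next
        case False
        show ?thesis
        proof (cases "y \<in> N")
          case True
          have "c1 y < (w-1)^2" using c1 True unfolding proper_colouring_def by auto
          thus ?thesis using True False unfolding col_def by auto
        next
          case False
          have "x \<in> M" "y \<in> M" using xS yS \<open>x \<notin> N\<close> False M_def by auto
          thus ?thesis using \<open>x \<notin> N\<close> False c2 xy unfolding col_def proper_colouring_def by auto
        qed
      qed
    qed
    thus ?thesis by blast
  qed
qed

end

theorem corollary3p18:
  fixes V :: "'a set" and E :: "'a \<Rightarrow> 'a \<Rightarrow> bool"
  assumes "graph V E"
    and "\<not> has_induced V E 5 fork_edge"
    and "\<not> has_induced V E 5 cocricket_edge"
  shows "chromatic_number V E \<le> (clique_number V E) ^ 2"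
proof -
  have g: "finite V" "\<And>x y. E x y \<Longrightarrow> E y x" "\<And>x. \<not> E x x" using assms(1) unfolding graph_def by auto
  interpret sg E by unfold_locales (use g in auto)
  have sub: "{card K | K. K \<subseteq> V \<and> clique E K} \<subseteq> card ` Pow V" by auto
  have fin: "finite {card K | K. K \<subseteq> V \<and> clique E K}"
    by (rule finite_subset[OF sub]) (simp add: g(1))
  have "cliqb V (clique_number V E)" unfolding cliqb_def clique_number_def
  proof (intro allI impI)
    fix K assume "K \<subseteq> V" "clique E K"
    hence "card K \<in> {card K | K. K \<subseteq> V \<and> clique E K}" by blast
    thus "card K \<le> Max {card K | K. K \<subseteq> V \<and> clique E K}" by (rule Max_ge[OF fin])
  qed
  hence "\<exists>c. proper_colouring V E ((clique_number V E)^2) c"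
    by (rule main_col[OF g(1) assms(2) assms(3)])
  thus ?thesis unfolding chromatic_number_def by (rule Least_le)
qed

end
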